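(* Let client $c$ hold a local dataset of $S_c\ge 1$ samples $(\mathbf{x}^p_c(i), s_c(i), y_c(i))$, $i=1,\dots,S_c$, where $\mathbf{x}^p_c(i)\in\mathbb{R}^{d-1}$ are public attributes, $s_c(i)\in\{0,1\}$ is a binary sensitive attribute and $y_c(i)\in\mathbb{R}$ is the target. Let $\theta=(\theta[:p],\theta[s])\in\mathbb{R}^{d-1}\times\mathbb{R}$ be a linear (least squares) regression model with $\theta[s]\neq 0$, predicting $\mathbf{x}^p_c(i)^T\theta[:p]+s_c(i)\theta[s]$, and let $$E_c=\frac{1}{S_c}\sum_{i=1}^{S_c}\big(y_c(i)-\mathbf{x}^p_c(i)^T\theta[:p]-s_c(i)\theta[s]\big)^2$$ be its mean squared error on the local dataset. Consider the model-based attribute inference attack which, for each $i$, outputs $$\hat s_c(i)\in\arg\min_{s\in\{0,1\}}\big(\mathbf{x}^p_c(i)^T\theta[:p]+s\,\theta[s]-y_c(i)\big)^2$$ (ties broken in favor of $1$). Then the accuracy of the attack, $\frac{1}{S_c}\,|\{i:\hat s_c(i)=s_c(i)\}|$, is at least $1-\frac{4E_c}{\theta[s]^2}$.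
   Context: The adversary knows $\theta$, and for every sample $i$ the public attributes $\mathbf{x}^p_c(i)$ and target $y_c(i)$, but not $s_c(i)$. *)

theory Defs
  imports "HOL-Analysis.Analysis"
begin

text \<open>Public attributes are vectors in R^m (m = d-1), represented as functions
  nat => real restricted to indices < m. The model theta = (thp, ths).\<close>

definition dotp :: "nat \<Rightarrow> (nat \<Rightarrow> real) \<Rightarrow> (nat \<Rightarrow> real) \<Rightarrow> real" where
  "dotp m x w = (\<Sum>j<m. x j * w j)"

definition lin_pred :: "nat \<Rightarrow> (nat \<Rightarrow> real) \<Rightarrow> real \<Rightarrow> (nat \<Rightarrow> real) \<Rightarrow> real \<Rightarrow> real" where
  "lin_pred m thp ths x s = dotp m x thp + s * ths"

definition mse :: "nat \<Rightarrow> nat \<Rightarrow> (nat \<Rightarrow> real) \<Rightarrow> real \<Rightarrow> (nat \<Rightarrow> nat \<Rightarrow> real)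
    \<Rightarrow> (nat \<Rightarrow> real) \<Rightarrow> (nat \<Rightarrow> real) \<Rightarrow> real" where
  "mse m S thp ths xp s y = (1 / real S) * (\<Sum>i=1..S. (y i - dotp m (xp i) thp - s i * ths)\<^sup>2)"

definition attack :: "nat \<Rightarrow> (nat \<Rightarrow> real) \<Rightarrow> real \<Rightarrow> (nat \<Rightarrow> real) \<Rightarrow> real \<Rightarrow> real" where
  "attack m thp ths x yv =
     (if (lin_pred m thp ths x 1 - yv)\<^sup>2 \<le> (lin_pred m thp ths x 0 - yv)\<^sup>2 then 1 else 0)"

definition attack_acc :: "nat \<Rightarrow> nat \<Rightarrow> (nat \<Rightarrow> real) \<Rightarrow> real \<Rightarrow> (nat \<Rightarrow> nat \<Rightarrow> real)
    \<Rightarrow> (nat \<Rightarrow> real) \<Rightarrow> (nat \<Rightarrow> real) \<Rightarrow> real" where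
  "attack_acc m S thp ths xp s y =
     real (card {i \<in> {1..S}. attack m thp ths (xp i) (y i) = s i}) / real S"

end

theory Submission
  imports Defs
begin

lemma pt1: fixes a t :: real assumes "t \<noteq> 0" "(a+t)^2 > a^2" shows "t^2/4 \<le> (a+t)^2"
proof (rule ccontr)
  assume "\<not> ?thesis"
  hence "(2*(a+t))^2 < t^2" by (simp add: power2_eq_square algebra_simps)
  hence h1: "\<bar>2*(a+t)\<bar> < \<bar>t\<bar>" by (metis abs_le_square_iff not_less)
  have "\<bar>a\<bar> < \<bar>a+t\<bar>" using assms(2) by (metis abs_le_square_iff not_less)
  moreover have "\<bar>t\<bar> \<le> \<bar>a+t\<bar> + \<bar>a\<bar>" using abs_triangle_ineq4[of "a+t" a] by simp
  moreover have "\<bar>2*(a+t)\<bar> = 2*\<bar>a+t\<bar>" by (simp only: abs_mult abs_numeral)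
  ultimately have "2*\<bar>a+t\<bar> < \<bar>a+t\<bar> + \<bar>a\<bar>" using h1 by simp
  thus False using \<open>\<bar>a\<bar> < \<bar>a+t\<bar>\<close> by simp
qed

lemma pt0: fixes a t :: real assumes "t \<noteq> 0" "(a+t)^2 \<le> a^2" shows "t^2/4 \<le> a^2"
proof -
  have "(-t)^2/4 \<le> ((a+t) + -t)^2"
  proof (cases "(a+t)^2 < a^2")
    case True
    then show ?thesis using pt1[of "-t" "a+t"] assms(1) by simp
  next
    case False
    hence eq: "(a+t)^2 = a^2" using assms(2) by simp
    hence "2*a*t + t^2 = 0" by (simp add: power2_eq_square algebra_simps)
    hence "t*(2*a+t) = 0" by (simp add: power2_eq_square algebra_simps)
    hence "2*a+t = 0" using assms(1) by simp
    hence "t = -2*a" by simp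
    thus ?thesis by (simp add: power2_eq_square)
  qed
  thus ?thesis by simp
qed

lemma ptw:
  assumes "ths \<noteq> 0" "s \<in> {0,1::real}" "attack m thp ths x yv \<noteq> s"
  shows "1 \<le> 4 * (yv - dotp m x thp - s * ths)^2 / ths^2"
proof -
  define a where "a = dotp m x thp - yv"
  have L1: "lin_pred m thp ths x 1 - yv = a + ths" "lin_pred m thp ths x 0 - yv = a"
    by (auto simp: lin_pred_def a_def)
  have "ths^2/4 \<le> (yv - dotp m x thp - s * ths)^2"
  proof (cases "s = 1")
    case True
    with assms(3) have "\<not> (a+ths)^2 \<le> a^2" unfolding attack_def L1 by (auto split: if_splits)
    hence "ths^2/4 \<le> (a+ths)^2" using pt1 assms(1) by (simp add: not_le)
    moreover have "(yv - dotp m x thp - s * ths)^2 = (a+ths)^2" using True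
      by (simp add: a_def power2_eq_square algebra_simps)
    ultimately show ?thesis by simp
  next
    case False
    with assms(2) have s0: "s = 0" by auto
    with assms(3) have "(a+ths)^2 \<le> a^2" unfolding attack_def L1 by (auto split: if_splits)
    hence "ths^2/4 \<le> a^2" using pt0 assms(1) by simp
    moreover have "(yv - dotp m x thp - s * ths)^2 = a^2" using s0
      by (simp add: a_def power2_eq_square algebra_simps)
    ultimately show ?thesis by simp
  qed
  moreover have "ths^2 > 0" using assms(1) by simp
  ultimately show ?thesis by (simp add: field_simps)
qed

theorem proposition1:
  fixes m S :: nat and thp :: "nat \<Rightarrow> real" and ths :: real
    and xp :: "nat \<Rightarrow> nat \<Rightarrow> real" and s y :: "nat \<Rightarrow> real"
  assumes "S \<ge> 1"
    and "ths \<noteq> 0"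
    and "\<forall>i\<in>{1..S}. s i \<in> {0, 1}"
  shows "attack_acc m S thp ths xp s y \<ge> 1 - 4 * mse m S thp ths xp s y / ths\<^sup>2"
proof -
  define C where "C = {i \<in> {1..S}. attack m thp ths (xp i) (y i) = s i}"
  define r where "r i = (y i - dotp m (xp i) thp - s i * ths)^2" for i
  have ind: "1 - (if i \<in> C then 1 else 0) \<le> 4 * r i / ths^2" if "i \<in> {1..S}" for i
  proof (cases "i \<in> C")
    case True thus ?thesis by (simp add: r_def)
  next
    case False
    hence "attack m thp ths (xp i) (y i) \<noteq> s i" using that by (simp add: C_def)
    thus ?thesis using ptw[OF assms(2)] assms(3) that False by (simp add: r_def)
  qed
  have "(\<Sum>i\<in>{1..S}. 1 - (if i \<in> C then 1 else 0::real)) \<le> (\<Sum>i\<in>{1..S}. 4 * r i / ths^2)"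
    by (rule sum_mono) (use ind in auto)
  moreover have "(\<Sum>i\<in>{1..S}. 1 - (if i \<in> C then 1 else 0::real)) = real S - real (card C)"
  proof -
    have "C \<subseteq> {1..S}" by (auto simp: C_def)
    hence "(\<Sum>i\<in>{1..S}. (if i \<in> C then 1 else 0::real)) = real (card C)"
      by (simp add: sum.If_cases Int_absorb1)
    thus ?thesis by (simp add: sum_subtractf)
  qed
  moreover have "(\<Sum>i\<in>{1..S}. 4 * r i / ths^2) = 4 * (\<Sum>i\<in>{1..S}. r i) / ths^2"
    by (simp add: sum_divide_distrib sum_distrib_left)
  ultimately have key: "real S - real (card C) \<le> 4 * (\<Sum>i\<in>{1..S}. r i) / ths^2" by simp
  have Sp: "real S > 0" using assms(1) by simp
  have "1 - 4 * mse m S thp ths xp s y / ths\<^sup>2 = (real S - 4 * (\<Sum>i\<in>{1..S}. r i) / ths^2) / real S"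
    using Sp by (simp add: mse_def r_def field_simps)
  also have "\<dots> \<le> real (card C) / real S"
    using key Sp by (simp add: divide_right_mono)
  finally show ?thesis by (simp add: attack_acc_def C_def)
qed

end
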